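(* Let $G$ be a graph with adjacency matrix $A$, signless Laplacian $Q$, and maximum degree $\Delta$. (i) If $0\le\alpha\le1/2$, then $\rho(A_\alpha(G))\le\alpha\rho(Q)+(1-2\alpha)\rho(A)$. If $G$ is connected and irregular, equality holds if and only if $\alpha=0$ or $\alpha=1/2$. (ii) If $1/2\le\alpha\le1$, then $\rho(A_\alpha(G))\le(1-\alpha)\rho(Q)+(2\alpha-1)\Delta$. If $G$ is connected and irregular, equality holds if and only if $\alpha=1/2$ or $\alpha=1$.
   Context: For a graph $G$, $A(G)$ is the adjacency matrix, $D(G)$ the diagonal degree matrix, $Q(G)=D(G)+A(G)$ the signless Laplacian, and $A_\alpha(G)=\alpha D(G)+(1-\alpha)A(G)$ for $\alpha\in[0,1]$. $\rho(M)$ is the largest eigenvalue of a real symmetric matrix $M$. A graph is irregular if not all its vertices have the same degree. *)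

theory Defs
  imports "HOL-Analysis.Analysis"
begin

definition simple_graph :: "('n::finite \<Rightarrow> 'n \<Rightarrow> bool) \<Rightarrow> bool" where
  "simple_graph E \<longleftrightarrow> (\<forall>u v. E u v \<longleftrightarrow> E v u) \<and> (\<forall>u. \<not> E u u)"

definition degree :: "('n::finite \<Rightarrow> 'n \<Rightarrow> bool) \<Rightarrow> 'n \<Rightarrow> real" where
  "degree E u = real (card {v. E u v})"

definition max_degree :: "('n::finite \<Rightarrow> 'n \<Rightarrow> bool) \<Rightarrow> real" where
  "max_degree E = Max (range (degree E))"

definition adj_matrix :: "('n::finite \<Rightarrow> 'n \<Rightarrow> bool) \<Rightarrow> real^'n^'n" where
  "adj_matrix E = (\<chi> i j. if E i j then 1 else 0)"

definition deg_matrix :: "('n::finite \<Rightarrow> 'n \<Rightarrow> bool) \<Rightarrow> real^'n^'n" where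
  "deg_matrix E = (\<chi> i j. if i = j then degree E i else 0)"

definition signless_laplacian :: "('n::finite \<Rightarrow> 'n \<Rightarrow> bool) \<Rightarrow> real^'n^'n" where
  "signless_laplacian E = deg_matrix E + adj_matrix E"

definition A_alpha :: "real \<Rightarrow> ('n::finite \<Rightarrow> 'n \<Rightarrow> bool) \<Rightarrow> real^'n^'n" where
  "A_alpha \<alpha> E = \<alpha> *\<^sub>R deg_matrix E + (1 - \<alpha>) *\<^sub>R adj_matrix E"

definition is_eigenvalue :: "real^'n^'n \<Rightarrow> real \<Rightarrow> bool" where
  "is_eigenvalue M c \<longleftrightarrow> (\<exists>v. v \<noteq> 0 \<and> M *v v = c *\<^sub>R v)"

definition spectral_max :: "real^'n^'n \<Rightarrow> real" where
  "spectral_max M = Max {c. is_eigenvalue M c}"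

definition connected_graph :: "('n::finite \<Rightarrow> 'n \<Rightarrow> bool) \<Rightarrow> bool" where
  "connected_graph E \<longleftrightarrow> (\<forall>u v. E\<^sup>*\<^sup>* u v)"

definition irregular :: "('n::finite \<Rightarrow> 'n \<Rightarrow> bool) \<Rightarrow> bool" where
  "irregular E \<longleftrightarrow> (\<exists>u v. degree E u \<noteq> degree E v)"

end

theory Submission
  imports Defs
begin

definition qf :: "real^'n^'n \<Rightarrow> real^'n \<Rightarrow> real" where
  "qf M x = x \<bullet> (M *v x)"

lemma sym_inner:
  fixes M :: "real^'n^'n"
  assumes "transpose M = M"
  shows "x \<bullet> (M *v y) = (M *v x) \<bullet> y"
proof -
  have "x \<bullet> (M *v y) = (x v* M) \<bullet> y" by (rule dot_lmul_matrix[symmetric])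
  also have "x v* M = transpose M *v x" by simp
  finally show ?thesis using assms by simp
qed

lemma qf_scale: "qf M (c *\<^sub>R x) = c^2 * qf M x"
  by (simp add: qf_def matrix_vector_mult_scaleR power2_eq_square)

lemma rayleigh_exists:
  fixes M :: "real^'n^'n"
  shows "\<exists>x. norm x = 1 \<and> (\<forall>y. qf M y \<le> qf M x * (y \<bullet> y))"
proof -
  have "continuous_on (sphere 0 1) (qf M)"
    unfolding qf_def by (intro continuous_intros linear_continuous_on matrix_vector_mul_bounded_linear)
  moreover have "sphere (0::real^'n) 1 \<noteq> {}" by simp
  ultimately obtain x where x: "x \<in> sphere 0 1" and mx: "\<forall>y\<in>sphere 0 1. qf M y \<le> qf M x"
    using continuous_attains_sup[of "sphere 0 1" "qf M"] compact_sphere by blast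
  have "qf M y \<le> qf M x * (y \<bullet> y)" for y
  proof (cases "y = 0")
    case True then show ?thesis by (simp add: qf_def)
  next
    case False
    let ?z = "(1 / norm y) *\<^sub>R y"
    have "?z \<in> sphere 0 1" using False by simp
    hence "qf M ?z \<le> qf M x" using mx by blast
    hence "(1/norm y)^2 * qf M y \<le> qf M x" by (simp add: qf_scale)
    moreover have "y \<bullet> y = (norm y)^2" by (simp add: power2_norm_eq_inner)
    moreover have "norm y > 0" using False by simp
    ultimately show ?thesis by (simp add: field_simps)
  qed
  thus ?thesis using x by auto
qed

lemma quad_aux:
  fixes a K :: real
  assumes "a \<ge> 0" and "\<forall>t. 2*t*a + t^2*K \<le> 0"
  shows "a = 0"
proof (rule ccontr)
  assume "a \<noteq> 0"
  hence a: "a > 0" using assms by simp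
  define t where "t = a / (1 + \<bar>K\<bar>)"
  have t: "t > 0" using a by (simp add: t_def)
  have "2*t*a + t^2*K \<le> 0" using assms by blast
  hence "t * (2*a + t*K) \<le> 0" by (simp add: power2_eq_square algebra_simps)
  hence "2*a + t*K \<le> 0" using t by (simp add: mult_le_0_iff)
  moreover have "t * \<bar>K\<bar> < a" using a by (simp add: t_def field_simps)
  moreover have "- (t*K) \<le> t * \<bar>K\<bar>" using t by (simp add: abs_if)
  ultimately show False using a by linarith
qed

lemma kernel:
  fixes M :: "real^'n^'n"
  assumes sym: "transpose M = M" and le: "\<forall>y. qf M y \<le> l * (y \<bullet> y)"
    and eq: "qf M x = l * (x \<bullet> x)"
  shows "M *v x = l *\<^sub>R x"
proof -
  define w where "w = M *v x - l *\<^sub>R x"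
  define K where "K = qf M w - l * (w \<bullet> w)"
  have "2*t*(w \<bullet> w) + t^2*K \<le> 0" for t
  proof -
    have h: "qf M (x + t *\<^sub>R w) \<le> l * ((x + t *\<^sub>R w) \<bullet> (x + t *\<^sub>R w))" using le by blast
    have s: "x \<bullet> (M *v w) = w \<bullet> (M *v x)" using sym_inner[OF sym, of x w] by (simp add: inner_commute)
    have "qf M (x + t *\<^sub>R w) = qf M x + 2*t*(w \<bullet> (M *v x)) + t^2 * qf M w"
      unfolding qf_def using s
      by (simp add: matrix_vector_right_distrib matrix_vector_mult_scaleR inner_add_left inner_add_right
          power2_eq_square inner_commute algebra_simps)
    moreover have "(x + t *\<^sub>R w) \<bullet> (x + t *\<^sub>R w) = x \<bullet> x + 2*t*(w \<bullet> x) + t^2*(w \<bullet> w)"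
      by (simp add: inner_add_left inner_add_right power2_eq_square inner_commute algebra_simps)
    moreover have "w \<bullet> (M *v x) = w \<bullet> w + l * (w \<bullet> x)"
      by (simp add: w_def inner_diff_right inner_diff_left algebra_simps)
    ultimately show ?thesis using h eq by (simp add: K_def algebra_simps)
  qed
  hence "w \<bullet> w = 0" using quad_aux[of "w \<bullet> w" K] by auto
  thus ?thesis by (simp add: w_def)
qed

definition symm :: "real^'n^'n \<Rightarrow> bool" where "symm M \<longleftrightarrow> transpose M = M"

lemma eig_finite:
  fixes M :: "real^'n^'n"
  assumes sym: "transpose M = M"
  shows "finite {c. is_eigenvalue M c}"
proof -
  let ?S = "{c. is_eigenvalue M c}"
  define f where "f c = (SOME v. v \<noteq> 0 \<and> M *v v = c *\<^sub>R v)" for c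
  have f: "f c \<noteq> 0 \<and> M *v f c = c *\<^sub>R f c" if "c \<in> ?S" for c
    using that unfolding f_def is_eigenvalue_def by (metis (mono_tags, lifting) someI_ex mem_Collect_eq)
  have orth: "f c \<bullet> f d = 0" if "c \<in> ?S" "d \<in> ?S" "c \<noteq> d" for c d
  proof -
    have "f c \<bullet> (M *v f d) = (M *v f c) \<bullet> f d" by (rule sym_inner[OF sym])
    hence "d * (f c \<bullet> f d) = c * (f c \<bullet> f d)" using f[OF that(1)] f[OF that(2)] by simp
    thus ?thesis using that(3) by simp
  qed
  have inj: "inj_on f ?S"
  proof (rule inj_onI)
    fix c d assume "c \<in> ?S" "d \<in> ?S" "f c = f d"
    thus "c = d" using orth f by fastforce
  qed
  have "independent (f ` ?S)"
    proof (rule pairwise_orthogonal_independent)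
    show "pairwise orthogonal (f ` ?S)" unfolding pairwise_def orthogonal_def
      using orth by auto
    show "0 \<notin> f ` ?S" using f by force
  qed
  hence "finite (f ` ?S)" by (rule eucl.finiteI_independent)
  thus ?thesis using finite_imageD inj by blast
qed

lemma eig_le:
  fixes M :: "real^'n^'n"
  assumes mx: "\<forall>y. qf M y \<le> l * (y \<bullet> y)" and ev: "is_eigenvalue M c"
  shows "c \<le> l"
proof -
  obtain v where v: "v \<noteq> 0" "M *v v = c *\<^sub>R v" using ev unfolding is_eigenvalue_def by blast
  have "qf M v = c * (v \<bullet> v)" unfolding qf_def using v(2) by simp
  hence "c * (v \<bullet> v) \<le> l * (v \<bullet> v)" using mx by metis
  moreover have "v \<bullet> v > 0" using v(1) by simp
  ultimately show ?thesis by (rule mult_right_le_imp_le)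
qed

lemma spectral:
  fixes M :: "real^'n^'n"
  assumes sym: "transpose M = M"
  shows "(\<forall>y. qf M y \<le> spectral_max M * (y \<bullet> y))
    \<and> (\<exists>x. norm x = 1 \<and> qf M x = spectral_max M)"
proof -
  obtain x where x: "norm x = 1" and mx: "\<forall>y. qf M y \<le> qf M x * (y \<bullet> y)"
    using rayleigh_exists by blast
  have xx: "x \<bullet> x = 1" using x by (simp add: power2_norm_eq_inner[symmetric])
  have "M *v x = qf M x *\<^sub>R x" by (rule kernel[OF sym mx]) (simp add: xx)
  hence ev: "is_eigenvalue M (qf M x)" unfolding is_eigenvalue_def using x by (intro exI[of _ x]) auto
  have "spectral_max M = qf M x"
    unfolding spectral_max_def 
  proof (rule Max_eqI)
    show "finite {c. is_eigenvalue M c}" by (rule eig_finite[OF sym])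
    show "qf M x \<in> {c. is_eigenvalue M c}" using ev by blast
    fix c assume "c \<in> {c. is_eigenvalue M c}"
    thus "c \<le> qf M x" using eig_le[OF mx] by blast
  qed
  hence sm: "spectral_max M = qf M x" .
  show ?thesis
  proof (intro conjI)
    show "\<forall>y. qf M y \<le> spectral_max M * (y \<bullet> y)" unfolding sm by (rule mx)
    show "\<exists>x. norm x = 1 \<and> qf M x = spectral_max M" unfolding sm using x by blast
  qed
qed


lemma qf_sum: "qf M x = (\<Sum>i\<in>UNIV. \<Sum>j\<in>UNIV. x$i * M$i$j * x$j)"
  by (simp add: qf_def inner_vec_def matrix_vector_mult_def sum_distrib_left mult.assoc)

lemma spectral_nonneg:
  fixes M :: "real^'n^'n"
  assumes sym: "transpose M = M" and nn: "\<And>i j. M$i$j \<ge> 0"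
  shows "\<exists>x. norm x = 1 \<and> (\<forall>i. x$i \<ge> 0) \<and> M *v x = spectral_max M *\<^sub>R x"
proof -
  obtain x where x: "norm x = 1" "qf M x = spectral_max M" and
    le: "\<forall>y. qf M y \<le> spectral_max M * (y \<bullet> y)"
    using spectral[OF sym] by blast
  define y where "y = (\<chi> i. \<bar>x$i\<bar>)"
  have yy: "y \<bullet> y = x \<bullet> x" by (simp add: y_def inner_vec_def)
  have xx: "x \<bullet> x = 1" using x by (simp add: power2_norm_eq_inner[symmetric])
  have "qf M x \<le> qf M y" unfolding qf_sum
  proof (intro sum_mono)
    fix i j
    have "x$i * M$i$j * x$j \<le> \<bar>x$i * M$i$j * x$j\<bar>" by simp
    also have "\<dots> = y$i * M$i$j * y$j" using nn[of i j] by (simp add: y_def abs_mult)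
    finally show "x$i * M$i$j * x$j \<le> y$i * M$i$j * y$j" .
  qed
  hence "qf M y = spectral_max M * (y \<bullet> y)" using le[rule_format, of y] x yy xx by simp
  hence ev: "M *v y = spectral_max M *\<^sub>R y" by (rule kernel[OF sym le])
  have "norm y = 1" using yy xx by (simp add: norm_eq_sqrt_inner)
  moreover have "\<forall>i. y$i \<ge> 0" by (simp add: y_def)
  ultimately show ?thesis using ev by blast
qed


lemma qf_add: "qf (M + N) x = qf M x + qf N x"
  by (simp add: qf_def matrix_vector_mult_add_rdistrib inner_add_right)

lemma qf_scaleR: "qf (a *\<^sub>R M) x = a * qf M x"
  by (simp add: qf_def scaleR_matrix_vector_assoc[symmetric])

lemma sym_adj: "simple_graph E \<Longrightarrow> transpose (adj_matrix E) = adj_matrix E"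
  by (simp add: vec_eq_iff transpose_def adj_matrix_def simple_graph_def)

lemma sym_deg: "transpose (deg_matrix E) = deg_matrix E"
  by (simp add: vec_eq_iff transpose_def deg_matrix_def)

lemma sym_Q: "simple_graph E \<Longrightarrow> transpose (signless_laplacian E) = signless_laplacian E"
  by (simp add: vec_eq_iff transpose_def adj_matrix_def deg_matrix_def signless_laplacian_def simple_graph_def)

lemma sym_Aa: "simple_graph E \<Longrightarrow> transpose (A_alpha a E) = A_alpha a E"
  by (simp add: vec_eq_iff transpose_def adj_matrix_def deg_matrix_def A_alpha_def simple_graph_def)

lemma nn_Aa: "0 \<le> a \<Longrightarrow> a \<le> 1 \<Longrightarrow> A_alpha a E $ i $ j \<ge> 0"
  by (simp add: adj_matrix_def deg_matrix_def A_alpha_def degree_def)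

lemma qf_Aa: "qf (A_alpha a E) x = a * qf (deg_matrix E) x + (1 - a) * qf (adj_matrix E) x"
  by (simp add: A_alpha_def qf_add qf_scaleR)

lemma qf_Q: "qf (signless_laplacian E) x = qf (deg_matrix E) x + qf (adj_matrix E) x"
  by (simp add: signless_laplacian_def qf_add)

lemma deg_mult: "(deg_matrix E *v x) $ i = degree E i * x $ i"
proof -
  have "(deg_matrix E *v x) $ i = (\<Sum>j\<in>UNIV. (if i = j then degree E i else 0) * x $ j)"
    by (simp add: matrix_vector_mult_def deg_matrix_def)
  also have "\<dots> = (\<Sum>j\<in>UNIV. if i = j then degree E i * x $ j else 0)" by (rule sum.cong) auto
  also have "\<dots> = degree E i * x$i" by simp
  finally show ?thesis .
qed

lemma adj_mult: "(adj_matrix E *v x) $ i = (\<Sum>j\<in>UNIV. if E i j then x $ j else 0)"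
  unfolding matrix_vector_mult_def adj_matrix_def by (auto intro!: sum.cong)

lemma qf_D: "qf (deg_matrix E) x = (\<Sum>i\<in>UNIV. degree E i * (x$i)^2)"
  by (simp add: qf_def inner_vec_def deg_mult power2_eq_square algebra_simps)

lemma degree_le_max: "degree E u \<le> max_degree E"
  unfolding max_degree_def by (rule Max_ge) auto

lemma max_degree_attained: "\<exists>u. degree E u = max_degree E"
proof -
  have "max_degree E \<in> range (degree E)" unfolding max_degree_def by (rule Max_in) auto
  thus ?thesis by auto
qed

lemma qf_D_le: "qf (deg_matrix E) x \<le> max_degree E * (x \<bullet> x)"
proof -
  have "qf (deg_matrix E) x \<le> (\<Sum>i\<in>UNIV. max_degree E * (x$i)^2)"
    unfolding qf_D by (intro sum_mono mult_right_mono degree_le_max) auto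
  also have "\<dots> = max_degree E * (x \<bullet> x)"
    by (simp add: inner_vec_def sum_distrib_left power2_eq_square)
  finally show ?thesis .
qed

lemma regular_lemma:
  fixes x :: "real^'n"
  assumes conn: "connected_graph E" and nn: "\<forall>i. x$i \<ge> 0" and nz: "x \<noteq> 0"
    and ax: "adj_matrix E *v x = a *\<^sub>R x" and dx: "deg_matrix E *v x = c *\<^sub>R x"
  shows "\<not> irregular E"
proof -
  have step: "x$v = 0" if "E u v" "x$u = 0" for u v
  proof -
    have "(\<Sum>j\<in>UNIV. if E u j then x $ j else 0) = 0"
      using arg_cong[OF ax, of "\<lambda>z. z$u"] that(2) by (simp add: adj_mult)
    hence "\<forall>j\<in>UNIV. (if E u j then x $ j else 0) = 0"
      using nn by (subst sum_nonneg_eq_0_iff[symmetric]) auto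
    hence "(if E u v then x $ v else 0) = 0" by blast
    thus ?thesis using that(1) by simp
  qed
  have prp: "x$v = 0" if "E\<^sup>*\<^sup>* u v" "x$u = 0" for u v
    using that by (induction rule: rtranclp_induct) (auto intro: step)
  obtain i where i: "x$i \<noteq> 0" using nz by (auto simp: vec_eq_iff)
  have allnz: "x$u \<noteq> 0" for u
    using prp[of u i] conn i unfolding connected_graph_def by blast
  have "degree E u = c" for u
    using arg_cong[OF dx, of "\<lambda>z. z$u"] allnz[of u] by (simp add: deg_mult)
  thus ?thesis unfolding irregular_def by simp
qed


lemma qf_Aa_i: "qf (A_alpha a E) x = a * qf (signless_laplacian E) x + (1-2*a) * qf (adj_matrix E) x"
  by (simp add: qf_Aa qf_Q algebra_simps)

lemma qf_Aa_ii: "qf (A_alpha a E) x = (1-a) * qf (signless_laplacian E) x + (2*a-1) * qf (deg_matrix E) x"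
  by (simp add: qf_Aa qf_Q algebra_simps)

lemma unit_inner: "norm (x::real^'n) = 1 \<Longrightarrow> x \<bullet> x = 1"
  by (simp add: power2_norm_eq_inner[symmetric])

lemma qf_le_spec: "transpose M = M \<Longrightarrow> norm y = 1 \<Longrightarrow> qf M y \<le> spectral_max M"
  using spectral[of M] unit_inner[of y] by (metis mult.right_neutral)

lemma qf_le_spec': "transpose M = M \<Longrightarrow> \<forall>y. qf M y \<le> spectral_max M * (y \<bullet> y)"
  using spectral[of M] by blast

lemma part1_le:
  assumes g: "simple_graph E" and a: "0 \<le> a" "a \<le> 1/2"
  shows "spectral_max (A_alpha a E) \<le> a * spectral_max (signless_laplacian E) + (1 - 2*a) * spectral_max (adj_matrix E)"
proof -
  obtain x where x: "norm x = 1" "qf (A_alpha a E) x = spectral_max (A_alpha a E)"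
    using spectral[OF sym_Aa[OF g]] by blast
  have hq: "qf (signless_laplacian E) x \<le> spectral_max (signless_laplacian E)" by (rule qf_le_spec[OF sym_Q[OF g] x(1)])
  have hr: "qf (adj_matrix E) x \<le> spectral_max (adj_matrix E)" by (rule qf_le_spec[OF sym_adj[OF g] x(1)])
  have "a * qf (signless_laplacian E) x \<le> a * spectral_max (signless_laplacian E)"
      "(1-2*a) * qf (adj_matrix E) x \<le> (1-2*a) * spectral_max (adj_matrix E)"
    using a by (auto intro: mult_left_mono hq hr)
  thus ?thesis using x(2) qf_Aa_i[of a E x] by linarith
qed

lemma part2_le:
  assumes g: "simple_graph E" and a: "1/2 \<le> a" "a \<le> 1"
  shows "spectral_max (A_alpha a E) \<le> (1 - a) * spectral_max (signless_laplacian E) + (2*a - 1) * max_degree E"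
proof -
  obtain x where x: "norm x = 1" "qf (A_alpha a E) x = spectral_max (A_alpha a E)"
    using spectral[OF sym_Aa[OF g]] by blast
  have hq: "qf (signless_laplacian E) x \<le> spectral_max (signless_laplacian E)" by (rule qf_le_spec[OF sym_Q[OF g] x(1)])
  have hr: "qf (deg_matrix E) x \<le> max_degree E" using qf_D_le[of E x] unit_inner[OF x(1)] by simp
  have "(1-a) * qf (signless_laplacian E) x \<le> (1-a) * spectral_max (signless_laplacian E)"
      "(2*a-1) * qf (deg_matrix E) x \<le> (2*a-1) * max_degree E"
    using a by (auto intro: mult_left_mono hq hr)
  thus ?thesis using x(2) qf_Aa_ii[of a E x] by linarith
qed

lemma half_eq:
  assumes g: "simple_graph E"
  shows "spectral_max (A_alpha (1/2) E) = 1/2 * spectral_max (signless_laplacian E)"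
proof -
  have "spectral_max (A_alpha (1/2) E) \<le> 1/2 * spectral_max (signless_laplacian E)"
    using part1_le[OF g, of "1/2"] by simp
  moreover obtain x where x: "norm x = 1" "qf (signless_laplacian E) x = spectral_max (signless_laplacian E)"
    using spectral[OF sym_Q[OF g]] by blast
  moreover have "qf (A_alpha (1/2) E) x \<le> spectral_max (A_alpha (1/2) E)"
    by (rule qf_le_spec[OF sym_Aa[OF g] x(1)])
  ultimately show ?thesis using qf_Aa_i[of "1/2" E x] by simp
qed

lemma one_eq:
  assumes g: "simple_graph E"
  shows "spectral_max (A_alpha 1 E) = max_degree E"
proof -
  have A1: "A_alpha 1 E = deg_matrix E" by (simp add: A_alpha_def)
  have "spectral_max (A_alpha 1 E) \<le> max_degree E" using part2_le[OF g, of 1] by simp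
  moreover obtain u where u: "degree E u = max_degree E" using max_degree_attained by blast
  have "qf (deg_matrix E) (axis u 1) = degree E u"
  proof -
    have "qf (deg_matrix E) (axis u 1) = (\<Sum>i\<in>UNIV. if i = u then degree E u else 0)"
      unfolding qf_D by (rule sum.cong) (auto simp: axis_def)
    thus ?thesis by simp
  qed
  moreover have "qf (deg_matrix E) (axis u 1) \<le> spectral_max (deg_matrix E)"
    by (rule qf_le_spec[OF sym_deg]) (simp add: norm_axis_1)
  ultimately show ?thesis using A1 u by simp
qed

lemma part1_strict:
  assumes g: "simple_graph E" and conn: "connected_graph E" and irr: "irregular E"
    and a: "0 < a" "a < 1/2"
  shows "spectral_max (A_alpha a E) \<noteq> a * spectral_max (signless_laplacian E) + (1 - 2*a) * spectral_max (adj_matrix E)"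
proof
  assume eq: "spectral_max (A_alpha a E) = a * spectral_max (signless_laplacian E) + (1 - 2*a) * spectral_max (adj_matrix E)"
  obtain x where x: "norm x = 1" "\<forall>i. x$i \<ge> 0" "A_alpha a E *v x = spectral_max (A_alpha a E) *\<^sub>R x"
    using spectral_nonneg[OF sym_Aa[OF g], of a] nn_Aa[of a] a by fastforce
  have xx: "x \<bullet> x = 1" using unit_inner[OF x(1)] .
  have qa: "qf (A_alpha a E) x = spectral_max (A_alpha a E)" using x(3) xx by (simp add: qf_def)
  define q where "q = qf (signless_laplacian E) x"
  define r where "r = qf (adj_matrix E) x"
  have q: "q \<le> spectral_max (signless_laplacian E)" unfolding q_def by (rule qf_le_spec[OF sym_Q[OF g] x(1)])
  have r: "r \<le> spectral_max (adj_matrix E)" unfolding r_def by (rule qf_le_spec[OF sym_adj[OF g] x(1)])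
  have s: "a * (spectral_max (signless_laplacian E) - q) + (1-2*a) * (spectral_max (adj_matrix E) - r) = 0"
    using eq qa qf_Aa_i[of a E x] by (simp add: q_def r_def algebra_simps)
  have t1: "a * (spectral_max (signless_laplacian E) - q) \<ge> 0" using a q by simp
  have t2: "(1-2*a) * (spectral_max (adj_matrix E) - r) \<ge> 0" using a r by simp
  have "a * (spectral_max (signless_laplacian E) - q) = 0" using s t1 t2 by linarith
  hence qe: "q = spectral_max (signless_laplacian E)" using a by simp
  have "(1-2*a) * (spectral_max (adj_matrix E) - r) = 0" using s t1 t2 by linarith
  hence re: "r = spectral_max (adj_matrix E)" using a by simp
  have Qx: "signless_laplacian E *v x = spectral_max (signless_laplacian E) *\<^sub>R x"
    by (rule kernel[OF sym_Q[OF g] qf_le_spec'[OF sym_Q[OF g]]]) (simp add: xx qe[symmetric] q_def)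
  have Ax: "adj_matrix E *v x = spectral_max (adj_matrix E) *\<^sub>R x"
    by (rule kernel[OF sym_adj[OF g] qf_le_spec'[OF sym_adj[OF g]]]) (simp add: xx re[symmetric] r_def)
  have "deg_matrix E *v x = signless_laplacian E *v x - adj_matrix E *v x"
    by (simp add: signless_laplacian_def matrix_vector_mult_add_rdistrib)
  hence Dx: "deg_matrix E *v x = (spectral_max (signless_laplacian E) - spectral_max (adj_matrix E)) *\<^sub>R x"
    using Qx Ax by (simp add: scaleR_diff_left)
  have "x \<noteq> 0" using x(1) by auto
  thus False using regular_lemma[OF conn x(2) _ Ax Dx] irr by blast
qed

lemma part2_strict:
  assumes g: "simple_graph E" and conn: "connected_graph E" and irr: "irregular E"
    and a: "1/2 < a" "a < 1"
  shows "spectral_max (A_alpha a E) \<noteq> (1 - a) * spectral_max (signless_laplacian E) + (2*a - 1) * max_degree E"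
proof
  assume eq: "spectral_max (A_alpha a E) = (1 - a) * spectral_max (signless_laplacian E) + (2*a - 1) * max_degree E"
  obtain x where x: "norm x = 1" "\<forall>i. x$i \<ge> 0" "A_alpha a E *v x = spectral_max (A_alpha a E) *\<^sub>R x"
    using spectral_nonneg[OF sym_Aa[OF g], of a] nn_Aa[of a] a by fastforce
  have xx: "x \<bullet> x = 1" using unit_inner[OF x(1)] .
  have qa: "qf (A_alpha a E) x = spectral_max (A_alpha a E)" using x(3) xx by (simp add: qf_def)
  define q where "q = qf (signless_laplacian E) x"
  define r where "r = qf (deg_matrix E) x"
  have q: "q \<le> spectral_max (signless_laplacian E)" unfolding q_def by (rule qf_le_spec[OF sym_Q[OF g] x(1)])
  have r: "r \<le> max_degree E" unfolding r_def using qf_D_le[of E x] xx by simp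
  have s: "(1-a) * (spectral_max (signless_laplacian E) - q) + (2*a-1) * (max_degree E - r) = 0"
    using eq qa qf_Aa_ii[of a E x] by (simp add: q_def r_def algebra_simps)
  have t1: "(1-a) * (spectral_max (signless_laplacian E) - q) \<ge> 0" using a q by simp
  have t2: "(2*a-1) * (max_degree E - r) \<ge> 0" using a r by simp
  have "(1-a) * (spectral_max (signless_laplacian E) - q) = 0" using s t1 t2 by linarith
  hence qe: "q = spectral_max (signless_laplacian E)" using a by simp
  have "(2*a-1) * (max_degree E - r) = 0" using s t1 t2 by linarith
  hence re: "r = max_degree E" using a by simp
  have Qx: "signless_laplacian E *v x = spectral_max (signless_laplacian E) *\<^sub>R x"
    by (rule kernel[OF sym_Q[OF g] qf_le_spec'[OF sym_Q[OF g]]]) (simp add: xx qe[symmetric] q_def)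
  have Dx: "deg_matrix E *v x = max_degree E *\<^sub>R x"
  proof (rule kernel[OF sym_deg])
    show "\<forall>y. qf (deg_matrix E) y \<le> max_degree E * (y \<bullet> y)" using qf_D_le by blast
    show "qf (deg_matrix E) x = max_degree E * (x \<bullet> x)" using re xx by (simp add: r_def)
  qed
  have "adj_matrix E *v x = signless_laplacian E *v x - deg_matrix E *v x"
    by (simp add: signless_laplacian_def matrix_vector_mult_add_rdistrib)
  hence Ax: "adj_matrix E *v x = (spectral_max (signless_laplacian E) - max_degree E) *\<^sub>R x"
    using Qx Dx by (simp add: scaleR_diff_left)
  have "x \<noteq> 0" using x(1) by auto
  thus False using regular_lemma[OF conn x(2) _ Ax Dx] irr by blast
qed

theorem proposition9:
  fixes E :: "'n::finite \<Rightarrow> 'n \<Rightarrow> bool"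
  assumes "simple_graph E"
  shows "(\<forall>\<alpha>. 0 \<le> \<alpha> \<and> \<alpha> \<le> 1/2 \<longrightarrow>
            spectral_max (A_alpha \<alpha> E)
              \<le> \<alpha> * spectral_max (signless_laplacian E) + (1 - 2*\<alpha>) * spectral_max (adj_matrix E))
       \<and> (connected_graph E \<and> irregular E \<longrightarrow>
          (\<forall>\<alpha>. 0 \<le> \<alpha> \<and> \<alpha> \<le> 1/2 \<longrightarrow>
            (spectral_max (A_alpha \<alpha> E)
              = \<alpha> * spectral_max (signless_laplacian E) + (1 - 2*\<alpha>) * spectral_max (adj_matrix E)
             \<longleftrightarrow> \<alpha> = 0 \<or> \<alpha> = 1/2)))
       \<and> (\<forall>\<alpha>. 1/2 \<le> \<alpha> \<and> \<alpha> \<le> 1 \<longrightarrow>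
            spectral_max (A_alpha \<alpha> E)
              \<le> (1 - \<alpha>) * spectral_max (signless_laplacian E) + (2*\<alpha> - 1) * max_degree E)
       \<and> (connected_graph E \<and> irregular E \<longrightarrow>
          (\<forall>\<alpha>. 1/2 \<le> \<alpha> \<and> \<alpha> \<le> 1 \<longrightarrow>
            (spectral_max (A_alpha \<alpha> E)
              = (1 - \<alpha>) * spectral_max (signless_laplacian E) + (2*\<alpha> - 1) * max_degree E
             \<longleftrightarrow> \<alpha> = 1/2 \<or> \<alpha> = 1)))"
proof (intro conjI impI allI)
  note g = assms
  show "spectral_max (A_alpha a E) \<le> a * spectral_max (signless_laplacian E) + (1 - 2*a) * spectral_max (adj_matrix E)"
    if "0 \<le> a \<and> a \<le> 1/2" for a using part1_le[OF g] that by blast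
  show "spectral_max (A_alpha a E) \<le> (1 - a) * spectral_max (signless_laplacian E) + (2*a - 1) * max_degree E"
    if "1/2 \<le> a \<and> a \<le> 1" for a using part2_le[OF g] that by blast
  show "spectral_max (A_alpha a E) = a * spectral_max (signless_laplacian E) + (1 - 2*a) * spectral_max (adj_matrix E)
        \<longleftrightarrow> a = 0 \<or> a = 1/2"
    if c: "connected_graph E \<and> irregular E" and a: "0 \<le> a \<and> a \<le> 1/2" for a
  proof
    assume "spectral_max (A_alpha a E) = a * spectral_max (signless_laplacian E) + (1 - 2*a) * spectral_max (adj_matrix E)"
    thus "a = 0 \<or> a = 1/2" using part1_strict[OF g, of a] c a by force
  next
    assume "a = 0 \<or> a = 1/2"
    thus "spectral_max (A_alpha a E) = a * spectral_max (signless_laplacian E) + (1 - 2*a) * spectral_max (adj_matrix E)"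
    proof
      assume h: "a = 0" show ?thesis unfolding h by (simp add: A_alpha_def)
    next
      assume h: "a = 1/2" show ?thesis unfolding h using half_eq[OF g] by simp
    qed
  qed
  show "spectral_max (A_alpha a E) = (1 - a) * spectral_max (signless_laplacian E) + (2*a - 1) * max_degree E
        \<longleftrightarrow> a = 1/2 \<or> a = 1"
    if c: "connected_graph E \<and> irregular E" and a: "1/2 \<le> a \<and> a \<le> 1" for a
  proof
    assume "spectral_max (A_alpha a E) = (1 - a) * spectral_max (signless_laplacian E) + (2*a - 1) * max_degree E"
    thus "a = 1/2 \<or> a = 1" using part2_strict[OF g, of a] c a by force
  next
    assume "a = 1/2 \<or> a = 1"
    thus "spectral_max (A_alpha a E) = (1 - a) * spectral_max (signless_laplacian E) + (2*a - 1) * max_degree E"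
    proof
      assume h: "a = 1/2" show ?thesis unfolding h using half_eq[OF g] by simp
    next
      assume h: "a = 1" show ?thesis unfolding h using one_eq[OF g] by simp
    qed
  qed
qed

end
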